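(* Let $(\mathcal{P},d)$ be a 1-2-metric and $\alpha>0$. A strategy profile of the greedy-routing network creation game on $(\mathcal{P},d)$ with edge price $\alpha$ is a Nash equilibrium if and only if its network is a Balanced Domination Set Graph for $\alpha$ (BDSG$(\alpha)$).
   Context: A 1-2-metric is a finite metric space $(\mathcal{P},d)$ with $d(u,v)\in\{1,2\}$ for all distinct $u,v$. Game: agents are the points of $\mathcal{P}$; agent $u$'s strategy is $S_u\subseteq\mathcal{P}\setminus\{u\}$; a profile $\mathbf{s}$ defines the directed network $G(\mathbf{s})$ with arcs $(u,v)$, $v\in S_u$, of length $d(u,v)$. A greedy path from $u$ to $v$ is a directed path $u=x_1,\dots,x_j=v$ of arcs with $d(x_i,v)>d(x_{i+1},v)$ for all $i$. $\mathrm{stretch}(u,v)$ is the minimum length of a greedy path from $u$ to $v$ divided by $d(u,v)$, or a fixed sufficiently large penalty constant $Z$ if none exists. Cost: $c_u(\mathbf{s})=\sum_{v\ne u}\mathrm{stretch}_{G(\mathbf{s})}(u,v)+\alpha|S_u|$. A Nash equilibrium is a profile in which no agent can strictly decrease its cost by changing its own strategy. Notation for a directed network $G$ on $\mathcal{P}$ and node $u$: $N(u)$ is the set of out-neighbours of $u$; $W_2(u)=\{v\in N(u):d(u,v)=2\}$; $W_{1\to1}(u)$ is the set of nodes $w\ne u$ such that there is $v$ with $d(u,v)=d(v,w)=1$ and $(u,v),(v,w)$ arcs of $G$; $W_2^+(u)=W_2(u)\cap W_{1\to1}(u)$. $G^1_{-u}$ is the directed graph on $\mathcal{P}\setminus\{u\}$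 with arc $(v,w)$ for every pair with $d(v,w)=1$. A vertex set $D$ of a directed graph $H$ is dominating if every vertex of $H$ outside $D$ has an in-neighbour in $D$. A Domination Set Graph (DSG) is a directed network $G$ on $\mathcal{P}$ such that (i) $G$ contains every arc $(v,w)$ with $d(v,w)=1$; (ii) for every $u$, $N(u)$ is dominating in $G^1_{-u}$; (iii) for every $u$ there is no set $N'\subseteq\mathcal{P}\setminus\{u\}$ obtained from $N(u)$ by deleting one element or replacing one element by another, such that $N'$ contains all $v$ with $d(u,v)=1$, $N'$ is dominating in $G^1_{-u}$, and $|\{v\in N':d(u,v)=2\}\cap W_{1\to1}(u)|<|W_2^+(u)|$. A BDSG$(\alpha)$ is a DSG in which, for every node $u$, the quantity $(\alpha-\tfrac12)|W_2(u)|+\tfrac12|W_2^+(u)|$ is minimum among all choices of an out-neighbourhood $N'\subseteq\mathcal{P}\setminus\{u\}$ of $u$ (all other arcs unchanged) that contain every $v$ with $d(u,v)=1$ and are dominating in $G^1_{-u}$ (the sets $W_2,W_2^+$ being computed with respect to $N'$). *)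

theory Defs
  imports Complex_Main
begin

definition one_two_metric :: "'a set \<Rightarrow> ('a \<Rightarrow> 'a \<Rightarrow> nat) \<Rightarrow> bool" where
  "one_two_metric P d \<longleftrightarrow>
     (\<forall>u\<in>P. d u u = 0) \<and>
     (\<forall>u\<in>P. \<forall>v\<in>P. d u v = d v u) \<and>
     (\<forall>u\<in>P. \<forall>v\<in>P. \<forall>w\<in>P. d u w \<le> d u v + d v w) \<and>
     (\<forall>u\<in>P. \<forall>v\<in>P. u \<noteq> v \<longrightarrow> d u v \<in> {1, 2})"

definition profile :: "'a set \<Rightarrow> ('a \<Rightarrow> 'a set) \<Rightarrow> bool" where
  "profile P s \<longleftrightarrow> (\<forall>u\<in>P. s u \<subseteq> P - {u})"

definition net :: "'a set \<Rightarrow> ('a \<Rightarrow> 'a set) \<Rightarrow> ('a \<times> 'a) set" where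
  "net P s = {(u, v). u \<in> P \<and> v \<in> s u}"

definition greedy_path :: "('a \<times> 'a) set \<Rightarrow> ('a \<Rightarrow> 'a \<Rightarrow> nat) \<Rightarrow> 'a \<Rightarrow> 'a \<Rightarrow> 'a list \<Rightarrow> bool" where
  "greedy_path E d u v xs \<longleftrightarrow> xs \<noteq> [] \<and> hd xs = u \<and> last xs = v \<and>
     (\<forall>i. Suc i < length xs \<longrightarrow>
        (xs ! i, xs ! Suc i) \<in> E \<and> d (xs ! Suc i) v < d (xs ! i) v)"

definition path_len :: "('a \<Rightarrow> 'a \<Rightarrow> nat) \<Rightarrow> 'a list \<Rightarrow> nat" where
  "path_len d xs = (\<Sum>i<length xs - 1. d (xs ! i) (xs ! Suc i))"

definition stretch :: "real \<Rightarrow> ('a \<times> 'a) set \<Rightarrow> ('a \<Rightarrow> 'a \<Rightarrow> nat) \<Rightarrow> 'a \<Rightarrow> 'a \<Rightarrow> real" where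
  "stretch Z E d u v =
     (if \<exists>xs. greedy_path E d u v xs
      then real (LEAST l. \<exists>xs. greedy_path E d u v xs \<and> l = path_len d xs) / real (d u v)
      else Z)"

definition cost :: "'a set \<Rightarrow> ('a \<Rightarrow> 'a \<Rightarrow> nat) \<Rightarrow> real \<Rightarrow> real \<Rightarrow> ('a \<Rightarrow> 'a set) \<Rightarrow> 'a \<Rightarrow> real" where
  "cost P d \<alpha> Z s u =
     (\<Sum>v\<in>P - {u}. stretch Z (net P s) d u v) + \<alpha> * real (card (s u))"

definition nash :: "'a set \<Rightarrow> ('a \<Rightarrow> 'a \<Rightarrow> nat) \<Rightarrow> real \<Rightarrow> real \<Rightarrow> ('a \<Rightarrow> 'a set) \<Rightarrow> bool" where
  "nash P d \<alpha> Z s \<longleftrightarrow>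
     (\<forall>u\<in>P. \<forall>S'. S' \<subseteq> P - {u} \<longrightarrow> cost P d \<alpha> Z s u \<le> cost P d \<alpha> Z (s(u := S')) u)"

definition Nb :: "('a \<times> 'a) set \<Rightarrow> 'a \<Rightarrow> 'a set" where
  "Nb E u = {v. (u, v) \<in> E}"

definition W2 :: "('a \<times> 'a) set \<Rightarrow> ('a \<Rightarrow> 'a \<Rightarrow> nat) \<Rightarrow> 'a \<Rightarrow> 'a set" where
  "W2 E d u = {v \<in> Nb E u. d u v = 2}"

definition W11 :: "('a \<times> 'a) set \<Rightarrow> ('a \<Rightarrow> 'a \<Rightarrow> nat) \<Rightarrow> 'a \<Rightarrow> 'a set" where
  "W11 E d u = {w. w \<noteq> u \<and> (\<exists>v. d u v = 1 \<and> d v w = 1 \<and> (u, v) \<in> E \<and> (v, w) \<in> E)}"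

definition W2plus :: "('a \<times> 'a) set \<Rightarrow> ('a \<Rightarrow> 'a \<Rightarrow> nat) \<Rightarrow> 'a \<Rightarrow> 'a set" where
  "W2plus E d u = W2 E d u \<inter> W11 E d u"

text \<open>D is dominating in G^1_{-u}: vertex set P - {u}, arc (v,w) iff d v w = 1.\<close>
definition dominating :: "'a set \<Rightarrow> ('a \<Rightarrow> 'a \<Rightarrow> nat) \<Rightarrow> 'a \<Rightarrow> 'a set \<Rightarrow> bool" where
  "dominating P d u D \<longleftrightarrow> D \<subseteq> P - {u} \<and>
     (\<forall>w \<in> P - {u} - D. \<exists>v\<in>D. d v w = 1)"

definition DSG :: "'a set \<Rightarrow> ('a \<Rightarrow> 'a \<Rightarrow> nat) \<Rightarrow> ('a \<times> 'a) set \<Rightarrow> bool" where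
  "DSG P d E \<longleftrightarrow> E \<subseteq> P \<times> P \<and>
     (\<forall>v\<in>P. \<forall>w\<in>P. d v w = 1 \<longrightarrow> (v, w) \<in> E) \<and>
     (\<forall>u\<in>P. dominating P d u (Nb E u)) \<and>
     (\<forall>u\<in>P. \<not> (\<exists>N'. N' \<subseteq> P - {u} \<and>
          (\<exists>x\<in>Nb E u. N' = Nb E u - {x} \<or> (\<exists>y\<in>P - {u}. N' = (Nb E u - {x}) \<union> {y})) \<and>
          {v\<in>P. d u v = 1} \<subseteq> N' \<and>
          dominating P d u N' \<and>
          card ({v\<in>N'. d u v = 2} \<inter> W11 E d u) < card (W2plus E d u)))"

definition replace_out :: "('a \<times> 'a) set \<Rightarrow> 'a \<Rightarrow> 'a set \<Rightarrow> ('a \<times> 'a) set" where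
  "replace_out E u N' = {(x, y) \<in> E. x \<noteq> u} \<union> {(u, y) | y. y \<in> N'}"

definition bal_val :: "real \<Rightarrow> ('a \<times> 'a) set \<Rightarrow> ('a \<Rightarrow> 'a \<Rightarrow> nat) \<Rightarrow> 'a \<Rightarrow> real" where
  "bal_val \<alpha> E d u = (\<alpha> - 1/2) * real (card (W2 E d u)) + 1/2 * real (card (W2plus E d u))"

definition BDSG :: "'a set \<Rightarrow> ('a \<Rightarrow> 'a \<Rightarrow> nat) \<Rightarrow> real \<Rightarrow> ('a \<times> 'a) set \<Rightarrow> bool" where
  "BDSG P d \<alpha> E \<longleftrightarrow> DSG P d E \<and>
     (\<forall>u\<in>P. \<forall>N'. N' \<subseteq> P - {u} \<and> {v\<in>P. d u v = 1} \<subseteq> N' \<and> dominating P d u N' \<longrightarrow>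
        bal_val \<alpha> E d u \<le> bal_val \<alpha> (replace_out E u N') d u)"

end

theory Submission
  imports Defs
begin

lemma met_facts:
  assumes "one_two_metric P d"
  shows "u\<in>P \<Longrightarrow> d u u = 0"
    "u\<in>P \<Longrightarrow> v\<in>P \<Longrightarrow> d u v = d v u"
    "u\<in>P \<Longrightarrow> v\<in>P \<Longrightarrow> w\<in>P \<Longrightarrow> d u w \<le> d u v + d v w"
    "u\<in>P \<Longrightarrow> v\<in>P \<Longrightarrow> u\<noteq>v \<Longrightarrow> d u v = 1 \<or> d u v = 2"
  using assms unfolding one_two_metric_def by auto

lemma greedy_cases:
  assumes met: "one_two_metric P d" and EP: "E \<subseteq> P \<times> P" and u: "u\<in>P" and v: "v\<in>P"
    and uv: "u\<noteq>v" and g: "greedy_path E d u v xs"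
  shows "(xs = [u,v] \<and> (u,v)\<in>E) \<or>
         (\<exists>x. xs = [u,x,v] \<and> (u,x)\<in>E \<and> (x,v)\<in>E \<and> x\<in>P \<and> d x v = 1 \<and> d u v = 2)"
proof -
  from g have ne: "xs \<noteq> []" and h: "hd xs = u" and l: "last xs = v"
    and st: "\<And>i. Suc i < length xs \<Longrightarrow> (xs!i, xs!Suc i) \<in> E \<and> d (xs!Suc i) v < d (xs!i) v"
    unfolding greedy_path_def by auto
  have x0: "xs!0 = u" using ne h by (simp add: hd_conv_nth)
  have dec: "i < length xs \<Longrightarrow> d (xs!i) v + i \<le> d u v" for i
  proof (induction i)
    case 0 then show ?case using x0 by simp
  next
    case (Suc i)
    then have "d (xs!Suc i) v < d (xs!i) v" using st by auto
    with Suc show ?case by simp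
  qed
  have d2: "d u v \<le> 2" using met_facts(4)[OF met u v uv] by auto
  have n1: "length xs \<noteq> 1"
  proof
    assume "length xs = 1"
    then obtain a where "xs = [a]" by (metis One_nat_def length_0_conv length_Suc_conv)
    then show False using h l uv by simp
  qed
  have "length xs - 1 \<le> 2" using dec[of "length xs - 1"] ne d2 by simp
  with ne n1 have "length xs = 2 \<or> length xs = 3" by (cases "length xs") auto
  then show ?thesis
  proof
    assume "length xs = 2"
    then obtain a b where xs: "xs = [a,b]" by (auto simp: length_Suc_conv numeral_2_eq_2)
    then show ?thesis using h l st[of 0] by auto
  next
    assume "length xs = 3"
    then obtain a b c where xs: "xs = [a,b,c]" by (auto simp: length_Suc_conv eval_nat_numeral)
    have a: "a = u" and c: "c = v" using xs h l by auto
    have s0: "(u,b) \<in> E" "d b v < d u v" using st[of 0] xs a by auto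
    have s1: "(b,v) \<in> E" "d v v < d b v" using st[of 1] xs c by auto
    have "b \<in> P" using s0 EP by auto
    moreover have "d v v = 0" using met_facts(1)[OF met v] .
    ultimately have "d b v = 1" "d u v = 2" using s0 s1 d2 by auto
    then show ?thesis using xs a c s0 s1 \<open>b\<in>P\<close> by auto
  qed
qed

lemma pl2: "path_len d [a,b] = d a b" by (simp add: path_len_def)
lemma pl3: "path_len d [a,b,c] = d a b + d b c"
  by (simp add: path_len_def eval_nat_numeral lessThan_Suc)

lemma gp2: "(u,v)\<in>E \<Longrightarrow> d v v < d u v \<Longrightarrow> greedy_path E d u v [u,v]"
  by (auto simp: greedy_path_def less_Suc_eq)

lemma gp3: "(u,x)\<in>E \<Longrightarrow> (x,v)\<in>E \<Longrightarrow> d x v < d u v \<Longrightarrow> d v v < d x v \<Longrightarrow> greedy_path E d u v [u,x,v]"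
  by (auto simp: greedy_path_def less_Suc_eq nth_Cons split: nat.splits)


lemma gp_len_ge:
  assumes met: "one_two_metric P d" and EP: "E \<subseteq> P \<times> P" and u: "u\<in>P" and v: "v\<in>P"
    and uv: "u\<noteq>v" and g: "greedy_path E d u v xs"
  shows "path_len d xs \<ge> d u v"
  using greedy_cases[OF met EP u v uv g]
proof
  assume "xs = [u,v] \<and> (u,v)\<in>E" then show ?thesis by (simp add: pl2)
next
  assume "\<exists>x. xs = [u,x,v] \<and> (u,x)\<in>E \<and> (x,v)\<in>E \<and> x\<in>P \<and> d x v = 1 \<and> d u v = 2"
  then obtain x where "xs = [u,x,v]" "x\<in>P" by blast
  then show ?thesis using met_facts(3)[OF met u \<open>x\<in>P\<close> v] by (simp add: pl3)
qed

lemma stretch_eq1: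
  assumes met: "one_two_metric P d" and EP: "E \<subseteq> P \<times> P" and u: "u\<in>P" and v: "v\<in>P"
    and uv: "u\<noteq>v" and g: "greedy_path E d u v xs" and len: "path_len d xs = d u v"
  shows "stretch Z E d u v = 1"
proof -
  have "(LEAST l. \<exists>xs. greedy_path E d u v xs \<and> l = path_len d xs) = d u v"
  proof (rule Least_equality)
    show "\<exists>xs. greedy_path E d u v xs \<and> d u v = path_len d xs" using g len by auto
  next
    fix l assume "\<exists>xs. greedy_path E d u v xs \<and> l = path_len d xs"
    then show "d u v \<le> l" using gp_len_ge[OF met EP u v uv] by auto
  qed
  moreover have "d u v > 0" using met_facts(4)[OF met u v uv] by auto
  ultimately show ?thesis using g unfolding stretch_def by auto
qed

lemma stretch_direct:
  assumes met: "one_two_metric P d" and EP: "E \<subseteq> P \<times> P" and u: "u\<in>P" and v: "v\<in>P"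
    and uv: "u\<noteq>v" and a: "(u,v)\<in>E"
  shows "stretch Z E d u v = 1"
proof -
  have "d v v < d u v" using met_facts(1)[OF met v] met_facts(4)[OF met u v uv] by auto
  then show ?thesis using stretch_eq1[OF met EP u v uv gp2[OF a] ] by (simp add: pl2)
qed

lemma stretch_d2_1:
  assumes met: "one_two_metric P d" and EP: "E \<subseteq> P \<times> P" and u: "u\<in>P" and v: "v\<in>P"
    and uv: "u\<noteq>v" and "d u v = 2" "(u,x)\<in>E" "(x,v)\<in>E" "d u x = 1" "d x v = 1"
  shows "stretch Z E d u v = 1"
proof -
  have "d v v = 0" using met_facts(1)[OF met v] .
  then have "greedy_path E d u v [u,x,v]" using assms by (intro gp3) auto
  then show ?thesis using stretch_eq1[OF met EP u v uv] assms by (simp add: pl3)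
qed

lemma stretch_d2_32:
  assumes met: "one_two_metric P d" and EP: "E \<subseteq> P \<times> P" and u: "u\<in>P" and v: "v\<in>P"
    and uv: "u\<noteq>v" and d2: "d u v = 2" and nd: "(u,v)\<notin>E" and ux: "(u,x)\<in>E" and xv: "(x,v)\<in>E"
    and dx: "d x v = 1"
    and no: "\<not>(\<exists>y. (u,y)\<in>E \<and> (y,v)\<in>E \<and> d u y = 1 \<and> d y v = 1)"
  shows "stretch Z E d u v = 3/2"
proof -
  have dvv: "d v v = 0" using met_facts(1)[OF met v] .
  have g: "greedy_path E d u v [u,x,v]" using assms dvv by (intro gp3) auto
  have all3: "path_len d xs = 3" if "greedy_path E d u v xs" for xs
    using greedy_cases[OF met EP u v uv that]
  proof
    assume "xs = [u,v] \<and> (u,v)\<in>E" then show ?thesis using nd by simp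
  next
    assume "\<exists>y. xs = [u,y,v] \<and> (u,y)\<in>E \<and> (y,v)\<in>E \<and> y\<in>P \<and> d y v = 1 \<and> d u v = 2"
    then obtain y where y: "xs = [u,y,v]" "(u,y)\<in>E" "(y,v)\<in>E" "y\<in>P" "d y v = 1" by blast
    have "y \<noteq> u" using y d2 by auto
    then have "d u y = 1 \<or> d u y = 2" using met_facts(4)[OF met u \<open>y\<in>P\<close>] by auto
    then have "d u y = 2" using no y by auto
    then show ?thesis using y by (simp add: pl3)
  qed
  have "(LEAST l. \<exists>xs. greedy_path E d u v xs \<and> l = path_len d xs) = 3"
  proof (rule Least_equality)
    show "\<exists>xs. greedy_path E d u v xs \<and> 3 = path_len d xs" using g all3 by auto
  next
    fix l assume "\<exists>xs. greedy_path E d u v xs \<and> l = path_len d xs"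
    then show "3 \<le> l" using all3 by auto
  qed
  then show ?thesis using g d2 unfolding stretch_def by auto
qed

lemma stretch_none:
  "\<not>(\<exists>xs. greedy_path E d u v xs) \<Longrightarrow> stretch Z E d u v = Z"
  by (simp add: stretch_def)

lemma stretch_nonneg: "Z \<ge> 0 \<Longrightarrow> stretch Z E d u v \<ge> 0"
  by (simp add: stretch_def)


definition "D1 P d u = {v\<in>P-{u}. d u v = 1}"
definition "D2 P d u = {v\<in>P-{u}. d u v = 2}"
definition "WW P d u = {w\<in>P-{u}. \<exists>v\<in>D1 P d u. d v w = 1}"
definition "bv \<alpha> P d u N = (\<alpha> - 1/2) * real (card (N \<inter> D2 P d u)) + 1/2 * real (card (N \<inter> D2 P d u \<inter> WW P d u))"
definition "KK \<alpha> P d u = (1+\<alpha>) * real (card (D1 P d u)) + real (card (D2 P d u)) + 1/2 * real (card (D2 P d u - WW P d u))"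

lemma net_sub: "profile P s \<Longrightarrow> net P s \<subseteq> P \<times> P"
  by (auto simp: profile_def net_def)

lemma net_mem: "(a,b) \<in> net P s \<longleftrightarrow> a \<in> P \<and> b \<in> s a" by (simp add: net_def)

lemma D1_alt: "one_two_metric P d \<Longrightarrow> u \<in> P \<Longrightarrow> {v\<in>P. d u v = 1} = D1 P d u"
  using met_facts(1) by (fastforce simp: D1_def)

lemma PD12: "one_two_metric P d \<Longrightarrow> u \<in> P \<Longrightarrow> P - {u} = D1 P d u \<union> D2 P d u"
  using met_facts(4) by (fastforce simp: D1_def D2_def)

lemma cost_bad:
  assumes met: "one_two_metric P d" and fin: "finite P" and pr: "profile P s" and u: "u\<in>P"
    and Z: "Z \<ge> 0" and al: "\<alpha> \<ge> 0" and bad: "\<not>(D1 P d u \<subseteq> s u \<and> dominating P d u (s u))"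
  shows "cost P d \<alpha> Z s u \<ge> Z"
proof -
  have EP: "net P s \<subseteq> P \<times> P" using net_sub[OF pr] .
  have su: "s u \<subseteq> P - {u}" using pr u by (auto simp: profile_def)
  obtain v where v: "v \<in> P-{u}" and sv: "stretch Z (net P s) d u v = Z"
  proof (cases "D1 P d u \<subseteq> s u")
    case False
    then obtain v where v: "v \<in> D1 P d u" "v \<notin> s u" by auto
    have "\<not>(\<exists>xs. greedy_path (net P s) d u v xs)"
    proof
      assume "\<exists>xs. greedy_path (net P s) d u v xs"
      then obtain xs where g: "greedy_path (net P s) d u v xs" by blast
      from greedy_cases[OF met EP u _ _ g] v show False by (auto simp: D1_def net_mem)
    qed
    then show ?thesis using that v by (auto simp: D1_def stretch_none)
  next
    case True
    with bad have "\<not> dominating P d u (s u)" by auto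
    then obtain w where w: "w \<in> P - {u} - s u" and nw: "\<forall>x\<in>s u. d x w \<noteq> 1"
      using su unfolding dominating_def by auto
    have "d u w \<noteq> 1" using w True by (auto simp: D1_def)
    then have d2: "d u w = 2" using met_facts(4)[OF met u] w by auto
    have "\<not>(\<exists>xs. greedy_path (net P s) d u w xs)"
    proof
      assume "\<exists>xs. greedy_path (net P s) d u w xs"
      then obtain xs where g: "greedy_path (net P s) d u w xs" by blast
      from greedy_cases[OF met EP u _ _ g] w nw show False by (auto simp: net_mem)
    qed
    then show ?thesis using that w by (auto simp: stretch_none)
  qed
  have "Z \<le> (\<Sum>v\<in>P-{u}. stretch Z (net P s) d u v)"
    using member_le_sum[of v "P-{u}" "\<lambda>v. stretch Z (net P s) d u v"] v sv fin stretch_nonneg[OF Z]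
    by fastforce
  moreover have "0 \<le> \<alpha> * real (card (s u))" using al by simp
  ultimately show ?thesis unfolding cost_def by linarith
qed

lemma cost_all:
  assumes met: "one_two_metric P d" and fin: "finite P" and pr: "profile P s" and u: "u\<in>P"
    and su: "s u = P - {u}"
  shows "cost P d \<alpha> Z s u = (1+\<alpha>) * real (card P - 1)"
proof -
  have "\<forall>v\<in>P-{u}. stretch Z (net P s) d u v = 1"
    using stretch_direct[OF met net_sub[OF pr] u] su u by (auto simp: net_mem)
  then have "(\<Sum>v\<in>P-{u}. stretch Z (net P s) d u v) = real (card (P - {u}))" by simp
  then show ?thesis unfolding cost_def using su u fin by (simp add: algebra_simps)
qed


lemma sum_if_card:
  assumes "finite A" "B \<subseteq> A"
  shows "(\<Sum>v\<in>A. if v\<in>B then c else 1) = real (card A) + (c - 1) * real (card B)"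
proof -
  have "(\<Sum>v\<in>A. if v\<in>B then c else 1) = (\<Sum>v\<in>A. 1 + (if v\<in>B then c - 1 else 0))"
    by (rule sum.cong) auto
  also have "\<dots> = real (card A) + (\<Sum>v\<in>A. if v\<in>B then c - 1 else 0)"
    by (simp add: sum.distrib)
  also have "(\<Sum>v\<in>A. if v\<in>B then c - 1 else 0) = (c - 1) * real (card B)"
    using assms by (simp add: sum.If_cases Int_absorb1)
  finally show ?thesis .
qed

lemma cost_good:
  assumes met: "one_two_metric P d" and fin: "finite P" and pr: "profile P s" and u: "u\<in>P"
    and H: "\<forall>x\<in>P-{u}. \<forall>w\<in>P. d x w = 1 \<longrightarrow> w \<in> s x"
    and D1s: "D1 P d u \<subseteq> s u" and dom: "dominating P d u (s u)"
  shows "cost P d \<alpha> Z s u = KK \<alpha> P d u + bv \<alpha> P d u (s u)"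
    and "\<alpha> \<ge> 0 \<Longrightarrow> cost P d \<alpha> Z s u \<le> (3/2 + \<alpha>) * real (card P)"
proof -
  define N where "N = s u"
  define A where "A = D1 P d u" 
  define B where "B = D2 P d u"
  define W where "W = WW P d u"
  have EP: "net P s \<subseteq> P \<times> P" using net_sub[OF pr] .
  have su: "N \<subseteq> P - {u}" using pr u by (auto simp: profile_def N_def)
  have PAB: "P - {u} = A \<union> B" using PD12[OF met u] by (simp add: A_def B_def)
  have AB: "A \<inter> B = {}" by (auto simp: A_def B_def D1_def D2_def)
  have st: "stretch Z (net P s) d u v = (if v \<in> B - N - W then 3/2 else 1)" if v: "v \<in> P - {u}" for v
  proof -
    have vP: "v \<in> P" "u \<noteq> v" using v by auto
    have "d u v = 1 \<or> d u v = 2" using met_facts(4)[OF met u vP] .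
    then show ?thesis
    proof
      assume "d u v = 1"
      then have "v \<in> N" "v \<notin> B" using D1s v by (auto simp: N_def D1_def B_def D2_def)
      then show ?thesis using stretch_direct[OF met EP u vP] u by (auto simp: net_mem N_def)
    next
      assume d2: "d u v = 2"
      then have vB: "v \<in> B" using v by (auto simp: B_def D2_def)
      show ?thesis
      proof (cases "v \<in> N")
        case True
        then show ?thesis using stretch_direct[OF met EP u vP] u by (auto simp: net_mem N_def)
      next
        case vN: False
        show ?thesis
        proof (cases "v \<in> W")
          case True
          then obtain x where x: "x \<in> A" "d x v = 1" by (auto simp: W_def WW_def A_def)
          have "x \<in> P - {u}" "d u x = 1" using x by (auto simp: A_def D1_def)
          then have "(u,x) \<in> net P s" "(x,v) \<in> net P s"
            using x D1s H vP u by (auto simp: net_mem A_def)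
          then show ?thesis using stretch_d2_1[OF met EP u vP d2] \<open>d u x = 1\<close> x True by auto
        next
          case vW: False
          obtain x where x: "x \<in> N" "d x v = 1"
            using dom v vN unfolding dominating_def N_def by auto
          have xP: "x \<in> P - {u}" using x su by auto
          have ux: "(u,x) \<in> net P s" "(x,v) \<in> net P s"
            using x xP H vP u by (auto simp: net_mem N_def)
          have nd: "(u,v) \<notin> net P s" using vN by (auto simp: net_mem N_def)
          have no: "\<not>(\<exists>y. (u,y)\<in>net P s \<and> (y,v)\<in>net P s \<and> d u y = 1 \<and> d y v = 1)"
          proof
            assume "\<exists>y. (u,y)\<in>net P s \<and> (y,v)\<in>net P s \<and> d u y = 1 \<and> d y v = 1"
            then obtain y where y: "y \<in> s u" "d u y = 1" "d y v = 1" by (auto simp: net_mem)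
            then have "y \<in> A" using pr u by (auto simp: profile_def A_def D1_def)
            then have "v \<in> W" using y v by (auto simp: W_def WW_def A_def)
            then show False using vW by simp
          qed
          show ?thesis using stretch_d2_32[OF met EP u vP d2 nd ux x(2) no] vB vN vW by simp
        qed
      qed
    qed
  qed
  have finP: "finite (P - {u})" using fin by simp
  have BNW: "B - N - W \<subseteq> P - {u}" using PAB by auto
  have sumeq: "(\<Sum>v\<in>P-{u}. stretch Z (net P s) d u v) = real (card (P-{u})) + 1/2 * real (card (B - N - W))"
  proof -
    have "(\<Sum>v\<in>P-{u}. stretch Z (net P s) d u v) = (\<Sum>v\<in>P-{u}. if v \<in> B - N - W then 3/2 else 1)"
      by (rule sum.cong[OF refl st])
    then show ?thesis using sum_if_card[OF finP BNW, of "3/2"] by simp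
  qed
  have finA: "finite A" "finite B" "finite W" using fin by (auto simp: A_def B_def W_def D1_def D2_def WW_def)
  have c1: "card (P - {u}) = card A + card B" using PAB AB finA card_Un_disjoint by metis
  have NA: "N = A \<union> (N \<inter> B)" using su PAB D1s by (auto simp: A_def N_def)
  have c2: "card N = card A + card (N \<inter> B)"
    using NA finA card_Un_disjoint[of A "N \<inter> B"] AB by auto
  have c3: "card (B - W) = card (B - N - W) + card (N \<inter> B - W)"
  proof -
    have "B - W = (B - N - W) \<union> (N \<inter> B - W)" by auto
    then show ?thesis using finA card_Un_disjoint[of "B - N - W" "N \<inter> B - W"] by auto
  qed
  have c4: "card (N \<inter> B) = card (N \<inter> B \<inter> W) + card (N \<inter> B - W)"
  proof -
    have "N \<inter> B = (N \<inter> B \<inter> W) \<union> (N \<inter> B - W)" by auto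
    then show ?thesis using finA card_Un_disjoint[of "N \<inter> B \<inter> W" "N \<inter> B - W"] by auto
  qed
  have cst: "cost P d \<alpha> Z s u = real (card (P-{u})) + 1/2 * real (card (B - N - W)) + \<alpha> * real (card N)"
    unfolding cost_def sumeq N_def by simp
  show "cost P d \<alpha> Z s u = KK \<alpha> P d u + bv \<alpha> P d u (s u)"
    unfolding cst KK_def bv_def
    using c1 c2 c3 c4 unfolding N_def A_def B_def W_def
    by (simp add: algebra_simps)
  assume al: "\<alpha> \<ge> 0"
  have "card (B - N - W) \<le> card (P - {u})" using BNW finP card_mono by blast
  moreover have "card (P - {u}) \<le> card P" using fin by (simp add: card_Diff1_le)
  moreover have "card N \<le> card P" using su fin card_mono[of P N] by auto
  ultimately have "\<alpha> * real (card N) \<le> \<alpha> * real (card P)"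
     "real (card (P-{u})) + 1/2 * real (card (B - N - W)) \<le> 3/2 * real (card P)"
    using al by (auto intro: mult_left_mono)
  then show "cost P d \<alpha> Z s u \<le> (3/2 + \<alpha>) * real (card P)"
    unfolding cst by (simp add: algebra_simps)
qed


lemma replace_net: "u \<in> P \<Longrightarrow> replace_out (net P s) u N = net P (s(u:=N))"
  by (auto simp: replace_out_def net_def split: if_splits)

lemma Nb_net: "u \<in> P \<Longrightarrow> Nb (net P s) u = s u" by (auto simp: Nb_def net_def)

lemma W11_net:
  assumes met: "one_two_metric P d" and pr: "profile P s" and u: "u\<in>P"
    and H: "\<forall>x\<in>P-{u}. \<forall>w\<in>P. d x w = 1 \<longrightarrow> w \<in> s x" and D1s: "D1 P d u \<subseteq> s u"
  shows "W11 (net P s) d u = WW P d u"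
proof
  show "W11 (net P s) d u \<subseteq> WW P d u"
  proof
    fix w assume "w \<in> W11 (net P s) d u"
    then obtain v where "w \<noteq> u" "d u v = 1" "d v w = 1" "v \<in> s u" "v \<in> P" "w \<in> s v"
      using u by (auto simp: W11_def net_mem)
    moreover have "v \<in> P - {u}" "w \<in> P" using pr u \<open>v\<in>s u\<close> \<open>v\<in>P\<close> \<open>w \<in> s v\<close> by (auto simp: profile_def)
    ultimately show "w \<in> WW P d u" by (auto simp: WW_def D1_def)
  qed
next
  show "WW P d u \<subseteq> W11 (net P s) d u"
  proof
    fix w assume "w \<in> WW P d u"
    then obtain v where "w \<in> P" "w \<noteq> u" "v \<in> D1 P d u" "d v w = 1" by (auto simp: WW_def)
    then show "w \<in> W11 (net P s) d u" using H D1s u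
      by (auto simp: W11_def net_mem D1_def)
  qed
qed

lemma bal_net:
  assumes met: "one_two_metric P d" and pr: "profile P s" and u: "u\<in>P"
    and H: "\<forall>x\<in>P-{u}. \<forall>w\<in>P. d x w = 1 \<longrightarrow> w \<in> s x" and D1s: "D1 P d u \<subseteq> s u"
  shows "bal_val \<alpha> (net P s) d u = bv \<alpha> P d u (s u)"
proof -
  have W2e: "W2 (net P s) d u = s u \<inter> D2 P d u"
    using pr u by (auto simp: W2_def Nb_def net_def D2_def profile_def)
  show ?thesis unfolding bal_val_def bv_def W2plus_def W2e W11_net[OF assms] by simp
qed

lemma no_swap:
  assumes met: "one_two_metric P d" and fin: "finite P" and al: "\<alpha> > 0" and u: "u \<in> P"
    and N: "N \<subseteq> P - {u}" and D1N: "D1 P d u \<subseteq> N"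
    and min: "\<forall>N'. N' \<subseteq> P-{u} \<and> D1 P d u \<subseteq> N' \<and> dominating P d u N' \<longrightarrow> bv \<alpha> P d u N \<le> bv \<alpha> P d u N'"
    and N': "N' \<subseteq> P - {u}" and sw: "\<exists>x\<in>N. N' = N - {x} \<or> (\<exists>y\<in>P - {u}. N' = (N - {x}) \<union> {y})"
    and D1N': "D1 P d u \<subseteq> N'" and dom: "dominating P d u N'"
  shows "\<not> card (N' \<inter> D2 P d u \<inter> WW P d u) < card (N \<inter> D2 P d u \<inter> WW P d u)"
proof
  assume lt: "card (N' \<inter> D2 P d u \<inter> WW P d u) < card (N \<inter> D2 P d u \<inter> WW P d u)"
  define B where "B = D2 P d u"
  define W where "W = WW P d u"
  have finB: "finite B" using fin by (auto simp: B_def D2_def)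
  obtain x where x: "x \<in> N" and sw': "N' = N - {x} \<or> (\<exists>y\<in>P - {u}. N' = (N - {x}) \<union> {y})" using sw by blast
  have ge: "card (N \<inter> B) \<le> card (N' \<inter> B) + 1"
  proof -
    have "N \<inter> B \<subseteq> insert x (N' \<inter> B)" using sw' by auto
    then have "card (N \<inter> B) \<le> card (insert x (N' \<inter> B))" using finB by (intro card_mono) auto
    also have "\<dots> \<le> card (N' \<inter> B) + 1" using finB by (simp add: card_insert_if)
    finally show ?thesis .
  qed
  have le: "card (N' \<inter> B) \<le> card (N \<inter> B)"
  proof (cases "N' = N - {x}")
    case True
    then show ?thesis using finB by (intro card_mono) auto
  next
    case False
    then obtain y where y: "N' = (N - {x}) \<union> {y}" using sw' by blast
    show ?thesis
    proof (cases "x \<in> B")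
      case True
      have "N' \<inter> B \<subseteq> insert y (N \<inter> B - {x})" using y by auto
      then have "card (N' \<inter> B) \<le> card (insert y (N \<inter> B - {x}))" using finB by (intro card_mono) auto
      also have "\<dots> \<le> card (N \<inter> B - {x}) + 1" using finB by (simp add: card_insert_if)
      also have "\<dots> = card (N \<inter> B)"
      proof -
        have xi: "x \<in> N \<inter> B" using True x by auto
        then have "card (N \<inter> B) > 0" using finB by (auto simp: card_gt_0_iff)
        then show ?thesis using xi finB by (simp add: card_Diff_singleton)
      qed
      finally show ?thesis .
    next
      case False
      have "x \<in> P - {u}" using x N by auto
      then have "d u x = 1" using False met_facts(4)[OF met u, of x] by (auto simp: B_def D2_def)
      then have "x \<in> N'" using D1N' \<open>x \<in> P - {u}\<close> by (auto simp: D1_def)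
      then have "N' = N" using y x by auto
      then show ?thesis by simp
    qed
  qed
  have "bv \<alpha> P d u N \<le> bv \<alpha> P d u N'" using min N' D1N' dom by blast
  then have ineq: "(\<alpha> - 1/2) * real (card (N \<inter> B)) + 1/2 * real (card (N \<inter> B \<inter> W))
      \<le> (\<alpha> - 1/2) * real (card (N' \<inter> B)) + 1/2 * real (card (N' \<inter> B \<inter> W))"
    unfolding bv_def B_def W_def .
  have lt': "real (card (N' \<inter> B \<inter> W)) + 1 \<le> real (card (N \<inter> B \<inter> W))" using lt unfolding B_def W_def by linarith
  show False
  proof (cases "card (N' \<inter> B) = card (N \<inter> B)")
    case True
    then show ?thesis using ineq lt' by simp
  next
    case False
    then have e: "real (card (N' \<inter> B)) = real (card (N \<inter> B)) - 1" using ge le by linarith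
    have "(\<alpha> - 1/2) * real (card (N' \<inter> B)) = (\<alpha> - 1/2) * real (card (N \<inter> B)) - \<alpha> + 1/2"
      unfolding e by (simp add: algebra_simps)
    then show ?thesis using ineq lt' al by linarith
  qed
qed


definition "Good P d s \<longleftrightarrow> (\<forall>u\<in>P. D1 P d u \<subseteq> s u \<and> dominating P d u (s u))"
definition "Minl \<alpha> P d s \<longleftrightarrow> (\<forall>u\<in>P. \<forall>N'. N' \<subseteq> P-{u} \<and> D1 P d u \<subseteq> N' \<and> dominating P d u N'
    \<longrightarrow> bv \<alpha> P d u (s u) \<le> bv \<alpha> P d u N')"

lemma Good_H:
  assumes met: "one_two_metric P d" and g: "\<forall>u\<in>P. D1 P d u \<subseteq> s u"
  shows "\<forall>x\<in>P. \<forall>w\<in>P. d x w = 1 \<longrightarrow> w \<in> s x"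
proof (intro ballI impI)
  fix x w assume "x \<in> P" "w \<in> P" "d x w = 1"
  moreover then have "w \<noteq> x" using met_facts(1)[OF met] by auto
  ultimately show "w \<in> s x" using g by (auto simp: D1_def)
qed

lemma Hu_upd: "\<forall>x\<in>P. \<forall>w\<in>P. d x w = 1 \<longrightarrow> w \<in> s x \<Longrightarrow>
   \<forall>x\<in>P-{u}. \<forall>w\<in>P. d x w = 1 \<longrightarrow> w \<in> (s(u:=N)) x"
  by auto

lemma prof_upd: "profile P s \<Longrightarrow> N \<subseteq> P - {u} \<Longrightarrow> profile P (s(u:=N))"
  by (auto simp: profile_def)

lemma bal_upd:
  assumes met: "one_two_metric P d" and pr: "profile P s" and u: "u\<in>P"
    and H: "\<forall>x\<in>P. \<forall>w\<in>P. d x w = 1 \<longrightarrow> w \<in> s x"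
    and N': "N' \<subseteq> P-{u}" "D1 P d u \<subseteq> N'"
  shows "bal_val \<alpha> (replace_out (net P s) u N') d u = bv \<alpha> P d u N'"
proof -
  have "bal_val \<alpha> (net P (s(u:=N'))) d u = bv \<alpha> P d u ((s(u:=N')) u)"
    by (rule bal_net[OF met prof_upd[OF pr N'(1)] u Hu_upd[OF H]]) (use N' in simp)
  then show ?thesis using u by (simp add: replace_net)
qed

lemma BDSG_iff:
  assumes met: "one_two_metric P d" and fin: "finite P" and pr: "profile P s" and al: "\<alpha> > 0"
  shows "BDSG P d \<alpha> (net P s) \<longleftrightarrow> Good P d s \<and> Minl \<alpha> P d s"
proof
  assume b: "BDSG P d \<alpha> (net P s)"
  then have dsg: "DSG P d (net P s)" by (simp add: BDSG_def)
  have H: "\<forall>x\<in>P. \<forall>w\<in>P. d x w = 1 \<longrightarrow> w \<in> s x" using dsg by (auto simp: DSG_def net_mem)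
  have D1s: "\<forall>u\<in>P. D1 P d u \<subseteq> s u" using H by (auto simp: D1_def)
  have G: "Good P d s" using D1s dsg by (auto simp: Good_def DSG_def Nb_net)
  have M: "Minl \<alpha> P d s" unfolding Minl_def
  proof (intro ballI allI impI)
    fix u N' assume u: "u \<in> P" and N': "N' \<subseteq> P - {u} \<and> D1 P d u \<subseteq> N' \<and> dominating P d u N'"
    have "bal_val \<alpha> (net P s) d u \<le> bal_val \<alpha> (replace_out (net P s) u N') d u"
      using b u N' D1_alt[OF met u] unfolding BDSG_def by auto
    then show "bv \<alpha> P d u (s u) \<le> bv \<alpha> P d u N'"
      using bal_net[OF met pr u _ ] bal_upd[OF met pr u H] H D1s u N' by auto
  qed
  show "Good P d s \<and> Minl \<alpha> P d s" using G M by simp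
next
  assume "Good P d s \<and> Minl \<alpha> P d s"
  then have G: "Good P d s" and M: "Minl \<alpha> P d s" by auto
  have D1s: "\<forall>u\<in>P. D1 P d u \<subseteq> s u" using G by (simp add: Good_def)
  have H: "\<forall>x\<in>P. \<forall>w\<in>P. d x w = 1 \<longrightarrow> w \<in> s x" using Good_H[OF met D1s] .
  have su: "\<forall>u\<in>P. s u \<subseteq> P - {u}" using pr by (simp add: profile_def)
  have iii: "\<not> (\<exists>N'. N' \<subseteq> P - {u} \<and>
          (\<exists>x\<in>Nb (net P s) u. N' = Nb (net P s) u - {x} \<or> (\<exists>y\<in>P - {u}. N' = (Nb (net P s) u - {x}) \<union> {y})) \<and>
          {v\<in>P. d u v = 1} \<subseteq> N' \<and>
          dominating P d u N' \<and>
          card ({v\<in>N'. d u v = 2} \<inter> W11 (net P s) d u) < card (W2plus (net P s) d u))" if u: "u \<in> P" for u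
  proof
    assume "\<exists>N'. N' \<subseteq> P - {u} \<and>
          (\<exists>x\<in>Nb (net P s) u. N' = Nb (net P s) u - {x} \<or> (\<exists>y\<in>P - {u}. N' = (Nb (net P s) u - {x}) \<union> {y})) \<and>
          {v\<in>P. d u v = 1} \<subseteq> N' \<and>
          dominating P d u N' \<and>
          card ({v\<in>N'. d u v = 2} \<inter> W11 (net P s) d u) < card (W2plus (net P s) d u)"
    then obtain N' where N': "N' \<subseteq> P - {u}"
      and sw: "\<exists>x\<in>s u. N' = s u - {x} \<or> (\<exists>y\<in>P - {u}. N' = (s u - {x}) \<union> {y})"
      and D1N': "D1 P d u \<subseteq> N'" and dom: "dominating P d u N'"
      and lt: "card ({v\<in>N'. d u v = 2} \<inter> W11 (net P s) d u) < card (W2plus (net P s) d u)"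
      using Nb_net[OF u] D1_alt[OF met u] by auto
    have W11e: "W11 (net P s) d u = WW P d u" using W11_net[OF met pr u] H D1s u by auto
    have e1: "{v\<in>N'. d u v = 2} \<inter> W11 (net P s) d u = N' \<inter> D2 P d u \<inter> WW P d u"
      using N' W11e by (auto simp: D2_def)
    have e2: "W2plus (net P s) d u = s u \<inter> D2 P d u \<inter> WW P d u"
      using W11e su u by (auto simp: W2plus_def W2_def Nb_net D2_def)
    have mn: "\<forall>N'. N' \<subseteq> P-{u} \<and> D1 P d u \<subseteq> N' \<and> dominating P d u N' \<longrightarrow> bv \<alpha> P d u (s u) \<le> bv \<alpha> P d u N'"
      using M u by (simp add: Minl_def)
    show False using no_swap[OF met fin al u _ _ mn N' sw D1N' dom] su D1s u lt unfolding e1 e2 by auto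
  qed
  have dsg: "DSG P d (net P s)"
    unfolding DSG_def using net_sub[OF pr] H G iii by (auto simp: net_mem Nb_net Good_def)
  have mm: "bal_val \<alpha> (net P s) d u \<le> bal_val \<alpha> (replace_out (net P s) u N') d u"
    if u: "u \<in> P" and N': "N' \<subseteq> P - {u}" "{v\<in>P. d u v = 1} \<subseteq> N'" "dominating P d u N'" for u N'
  proof -
    have N'': "D1 P d u \<subseteq> N'" using N' D1_alt[OF met u] by auto
    have "bv \<alpha> P d u (s u) \<le> bv \<alpha> P d u N'" using M u N' N'' by (auto simp: Minl_def)
    then show ?thesis using bal_net[OF met pr u _ ] bal_upd[OF met pr u H N'(1) N''] H D1s u by auto
  qed
  show "BDSG P d \<alpha> (net P s)" unfolding BDSG_def using dsg mm by blast
qed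


theorem theorem2p7:
  fixes P :: "'a set" and d :: "'a \<Rightarrow> 'a \<Rightarrow> nat" and \<alpha> :: real
  assumes "finite P" and "one_two_metric P d" and "\<alpha> > 0"
  shows "\<exists>Z0::real. \<forall>Z \<ge> Z0. \<forall>s. profile P s \<longrightarrow>
           (nash P d \<alpha> Z s \<longleftrightarrow> BDSG P d \<alpha> (net P s))"
proof -
  note fin = assms(1) and met = assms(2) and al = assms(3)
  define Z0 where "Z0 = (2 + 2*\<alpha>) * real (card P) + 1"
  have b1: "(1+\<alpha>) * real (card P - 1) < Z0"
  proof -
    have "(1+\<alpha>) * real (card P - 1) \<le> (1+\<alpha>) * real (card P)" using al by (intro mult_left_mono) auto
    also have "\<dots> \<le> (2 + 2*\<alpha>) * real (card P)" using al by (intro mult_right_mono) auto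
    finally show ?thesis unfolding Z0_def by simp
  qed
  have b2: "(3/2+\<alpha>) * real (card P) < Z0"
  proof -
    have "(3/2+\<alpha>) * real (card P) \<le> (2 + 2*\<alpha>) * real (card P)" using al by (intro mult_right_mono) auto
    then show ?thesis unfolding Z0_def by simp
  qed
  have "nash P d \<alpha> Z s \<longleftrightarrow> BDSG P d \<alpha> (net P s)" if Z: "Z \<ge> Z0" and pr: "profile P s" for Z s
  proof -
    have "(2 + 2*\<alpha>) * real (card P) \<ge> 0" using al by (intro mult_nonneg_nonneg) auto
    then have Zp: "Z \<ge> 0" using Z unfolding Z0_def by linarith
    have "nash P d \<alpha> Z s \<longleftrightarrow> Good P d s \<and> Minl \<alpha> P d s"
    proof
      assume n: "nash P d \<alpha> Z s"
      have G: "Good P d s" unfolding Good_def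
      proof
        fix u assume u: "u \<in> P"
        show "D1 P d u \<subseteq> s u \<and> dominating P d u (s u)"
        proof (rule ccontr)
          assume bad: "\<not> (D1 P d u \<subseteq> s u \<and> dominating P d u (s u))"
          have c1: "cost P d \<alpha> Z s u \<ge> Z" using cost_bad[OF met fin pr u Zp _ bad] al by simp
          have "cost P d \<alpha> Z s u \<le> cost P d \<alpha> Z (s(u := P - {u})) u" using n u unfolding nash_def by blast
          also have "\<dots> = (1+\<alpha>) * real (card P - 1)"
            by (rule cost_all[OF met fin prof_upd[OF pr]]) (use u in auto)
          finally show False using c1 b1 Z by linarith
        qed
      qed
      have D1s: "\<forall>u\<in>P. D1 P d u \<subseteq> s u" using G by (simp add: Good_def)
      have H: "\<forall>x\<in>P. \<forall>w\<in>P. d x w = 1 \<longrightarrow> w \<in> s x" using Good_H[OF met D1s] .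
      have M: "Minl \<alpha> P d s" unfolding Minl_def
      proof (intro ballI allI impI)
        fix u N' assume u: "u \<in> P" and N': "N' \<subseteq> P - {u} \<and> D1 P d u \<subseteq> N' \<and> dominating P d u N'"
        have "cost P d \<alpha> Z s u \<le> cost P d \<alpha> Z (s(u := N')) u" using n u N' unfolding nash_def by blast
        moreover have "cost P d \<alpha> Z s u = KK \<alpha> P d u + bv \<alpha> P d u (s u)"
          using cost_good(1)[OF met fin pr u] H G u by (auto simp: Good_def)
        moreover have "cost P d \<alpha> Z (s(u := N')) u = KK \<alpha> P d u + bv \<alpha> P d u ((s(u := N')) u)"
          by (rule cost_good(1)[OF met fin prof_upd[OF pr] u Hu_upd[OF H]]) (use N' in auto)
        ultimately show "bv \<alpha> P d u (s u) \<le> bv \<alpha> P d u N'" by simp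
      qed
      show "Good P d s \<and> Minl \<alpha> P d s" using G M by simp
    next
      assume "Good P d s \<and> Minl \<alpha> P d s"
      then have G: "Good P d s" and M: "Minl \<alpha> P d s" by auto
      have D1s: "\<forall>u\<in>P. D1 P d u \<subseteq> s u" using G by (simp add: Good_def)
      have H: "\<forall>x\<in>P. \<forall>w\<in>P. d x w = 1 \<longrightarrow> w \<in> s x" using Good_H[OF met D1s] .
      show "nash P d \<alpha> Z s" unfolding nash_def
      proof (intro ballI allI impI)
        fix u S' assume u: "u \<in> P" and S': "S' \<subseteq> P - {u}"
        have cs: "cost P d \<alpha> Z s u = KK \<alpha> P d u + bv \<alpha> P d u (s u)"
          using cost_good(1)[OF met fin pr u] H G u by (auto simp: Good_def)
        have cs2: "cost P d \<alpha> Z s u \<le> (3/2 + \<alpha>) * real (card P)"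
          using cost_good(2)[OF met fin pr u] H G u al by (auto simp: Good_def)
        show "cost P d \<alpha> Z s u \<le> cost P d \<alpha> Z (s(u := S')) u"
        proof (cases "D1 P d u \<subseteq> S' \<and> dominating P d u S'")
          case True
          have "cost P d \<alpha> Z (s(u := S')) u = KK \<alpha> P d u + bv \<alpha> P d u ((s(u := S')) u)"
            by (rule cost_good(1)[OF met fin prof_upd[OF pr S'] u Hu_upd[OF H]]) (use True in auto)
          moreover have "bv \<alpha> P d u (s u) \<le> bv \<alpha> P d u S'" using M u S' True by (auto simp: Minl_def)
          ultimately show ?thesis using cs by simp
        next
          case False
          have "cost P d \<alpha> Z (s(u := S')) u \<ge> Z"
            using cost_bad[OF met fin prof_upd[OF pr S'] u Zp, of \<alpha>] False al by simp
          then show ?thesis using cs2 b2 Z by linarith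
        qed
      qed
    qed
    then show ?thesis using BDSG_iff[OF met fin pr al] by simp
  qed
  then show ?thesis by blast
qed

end
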